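(* Let $Q$ be a finite connected quandle, $S$ a set, $\theta:Q\times Q\to\mathrm{Sym}_S$ a quandle cocycle and $E=Q\times_\theta S$. The following are equivalent: (i) $\theta$ is cohomologous to the trivial cocycle $\mathbf{1}$; (ii) $|u^{\mathrm{LMlt}(E)}|=|Q|$ for every $u\in E$; (iii) $Q\times_\theta S\cong Q\times_{\mathbf{1}}S$ as quandles.
   Context: A quandle is a set $Q$ with a binary operation $*$ such that every left translation $L_x:y\mapsto x*y$ is bijective, $x*(y*z)=(x*y)*(x*z)$ and $x*x=x$. $\mathrm{LMlt}(Q)=\langle L_x:x\in Q\rangle$; $Q$ is connected if $\mathrm{LMlt}(Q)$ is transitive; $u^{\mathrm{LMlt}(E)}$ denotes the orbit of $u$. A quandle cocycle with values in $\mathrm{Sym}_S$ is $\theta:Q\times Q\to\mathrm{Sym}_S$ with $\theta_{x*y,x*z}\theta_{x,z}=\theta_{x,y*z}\theta_{y,z}$ and $\theta_{x,x}=1$; $\theta$ is cohomologous to the trivial cocycle $\mathbf{1}$ (constantly the identity) if there is $\gamma:Q\to\mathrm{Sym}_S$ with $\theta_{x,y}=\gamma_{x*y}\gamma_y^{-1}$ for all $x,y$. $Q\times_\theta S$ is the quandle on $Q\times S$ with $(x,a)*(y,b)=(x*y,\theta_{x,y}(b))$; in particular $Q\times_{\mathbf{1}}S$ is $(x,a)*(y,b)=(x*y,b)$. *)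

theory Defs
  imports "HOL-Combinatorics.Permutations"
begin

definition quandle :: "'a set \<Rightarrow> ('a \<Rightarrow> 'a \<Rightarrow> 'a) \<Rightarrow> bool" where
  "quandle Q op \<longleftrightarrow>
     (\<forall>x\<in>Q. \<forall>y\<in>Q. op x y \<in> Q) \<and>
     (\<forall>x\<in>Q. bij_betw (op x) Q Q) \<and>
     (\<forall>x\<in>Q. \<forall>y\<in>Q. \<forall>z\<in>Q. op x (op y z) = op (op x y) (op x z)) \<and>
     (\<forall>x\<in>Q. op x x = x)"

text \<open>Orbit of u under LMlt(Q) = the group generated by the left translations L_x, x in Q
  (closure of u under all L_x and their inverses on Q).\<close>
inductive_set lmlt_orbit :: "'a set \<Rightarrow> ('a \<Rightarrow> 'a \<Rightarrow> 'a) \<Rightarrow> 'a \<Rightarrow> 'a set"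
  for Q op u where
  base: "u \<in> lmlt_orbit Q op u"
| left: "\<lbrakk>v \<in> lmlt_orbit Q op u; x \<in> Q\<rbrakk> \<Longrightarrow> op x v \<in> lmlt_orbit Q op u"
| left_inv: "\<lbrakk>v \<in> lmlt_orbit Q op u; x \<in> Q; w \<in> Q; op x w = v\<rbrakk> \<Longrightarrow> w \<in> lmlt_orbit Q op u"

definition connected_quandle :: "'a set \<Rightarrow> ('a \<Rightarrow> 'a \<Rightarrow> 'a) \<Rightarrow> bool" where
  "connected_quandle Q op \<longleftrightarrow> quandle Q op \<and> (\<forall>x\<in>Q. lmlt_orbit Q op x = Q)"

definition quandle_cocycle ::
  "'a set \<Rightarrow> ('a \<Rightarrow> 'a \<Rightarrow> 'a) \<Rightarrow> 'b set \<Rightarrow> ('a \<Rightarrow> 'a \<Rightarrow> 'b \<Rightarrow> 'b) \<Rightarrow> bool" where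
  "quandle_cocycle Q op S \<theta> \<longleftrightarrow>
     (\<forall>x\<in>Q. \<forall>y\<in>Q. \<theta> x y permutes S) \<and>
     (\<forall>x\<in>Q. \<forall>y\<in>Q. \<forall>z\<in>Q. \<theta> (op x y) (op x z) \<circ> \<theta> x z = \<theta> x (op y z) \<circ> \<theta> y z) \<and>
     (\<forall>x\<in>Q. \<theta> x x = id)"

definition cohomologous_trivial ::
  "'a set \<Rightarrow> ('a \<Rightarrow> 'a \<Rightarrow> 'a) \<Rightarrow> 'b set \<Rightarrow> ('a \<Rightarrow> 'a \<Rightarrow> 'b \<Rightarrow> 'b) \<Rightarrow> bool" where
  "cohomologous_trivial Q op S \<theta> \<longleftrightarrow>
     (\<exists>\<gamma>. (\<forall>x\<in>Q. \<gamma> x permutes S) \<and>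
          (\<forall>x\<in>Q. \<forall>y\<in>Q. \<theta> x y = \<gamma> (op x y) \<circ> inv (\<gamma> y)))"

definition ext_op :: "('a \<Rightarrow> 'a \<Rightarrow> 'a) \<Rightarrow> ('a \<Rightarrow> 'a \<Rightarrow> 'b \<Rightarrow> 'b) \<Rightarrow> ('a \<times> 'b) \<Rightarrow> ('a \<times> 'b) \<Rightarrow> ('a \<times> 'b)" where
  "ext_op op \<theta> p q = (op (fst p) (fst q), \<theta> (fst p) (fst q) (snd q))"

definition quandle_iso :: "'a set \<Rightarrow> ('a \<Rightarrow> 'a \<Rightarrow> 'a) \<Rightarrow> 'c set \<Rightarrow> ('c \<Rightarrow> 'c \<Rightarrow> 'c) \<Rightarrow> ('a \<Rightarrow> 'c) \<Rightarrow> bool" where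
  "quandle_iso A opA B opB f \<longleftrightarrow> bij_betw f A B \<and> (\<forall>x\<in>A. \<forall>y\<in>A. f (opA x y) = opB (f x) (f y))"

definition quandle_isomorphic :: "'a set \<Rightarrow> ('a \<Rightarrow> 'a \<Rightarrow> 'a) \<Rightarrow> 'c set \<Rightarrow> ('c \<Rightarrow> 'c \<Rightarrow> 'c) \<Rightarrow> bool" where
  "quandle_isomorphic A opA B opB \<longleftrightarrow> (\<exists>f. quandle_iso A opA B opB f)"

end

theory Submission
  imports Defs
begin

lemma orbit_sub:
  assumes cl: "\<forall>x\<in>A. \<forall>y\<in>A. op x y \<in> A" and u: "u \<in> A"
  shows "lmlt_orbit A op u \<subseteq> A"
proof
  fix v assume "v \<in> lmlt_orbit A op u"
  then show "v \<in> A" by induction (use cl u in auto)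
qed

lemma orbit_trans:
  assumes "v \<in> lmlt_orbit A op u" "w \<in> lmlt_orbit A op v"
  shows "w \<in> lmlt_orbit A op u"
  using assms(2,1)
  by induction (auto intro: lmlt_orbit.intros)

lemma orbit_sym:
  assumes cl: "\<forall>x\<in>A. \<forall>y\<in>A. op x y \<in> A" and u: "u \<in> A"
    and v: "v \<in> lmlt_orbit A op u"
  shows "u \<in> lmlt_orbit A op v"
  using v
proof induction
  case base
  then show ?case by (rule lmlt_orbit.base)
next
  case (left v x)
  have vA: "v \<in> A" using orbit_sub[OF cl u] left.hyps(1) by auto
  have "v \<in> lmlt_orbit A op (op x v)"
    by (rule lmlt_orbit.left_inv[OF lmlt_orbit.base left.hyps(2) vA refl])
  then show ?case using orbit_trans left.IH by metis
next
  case (left_inv v x w)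
  have "v \<in> lmlt_orbit A op w"
    using lmlt_orbit.left[OF lmlt_orbit.base[where u=w and Q=A and op=op] left_inv.hyps(2)] left_inv.hyps(4) by simp
  then show ?case using orbit_trans left_inv.IH by metis
qed

lemma iso_orbit:
  assumes iso: "quandle_iso A opA B opB f"
    and cl: "\<forall>x\<in>A. \<forall>y\<in>A. opA x y \<in> A" and u: "u \<in> A"
  shows "f ` lmlt_orbit A opA u = lmlt_orbit B opB (f u)"
proof
  have bij: "bij_betw f A B" and hom: "\<forall>x\<in>A. \<forall>y\<in>A. f (opA x y) = opB (f x) (f y)"
    using iso unfolding quandle_iso_def by (rule conjunct1, rule conjunct2)
  show "f ` lmlt_orbit A opA u \<subseteq> lmlt_orbit B opB (f u)"
  proof
    fix z assume "z \<in> f ` lmlt_orbit A opA u"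
    then obtain v where v: "v \<in> lmlt_orbit A opA u" and z: "z = f v" by auto
    have "f v \<in> lmlt_orbit B opB (f u)" using v
    proof induction
      case base then show ?case by (rule lmlt_orbit.base)
    next
      case (left v x)
      have vA: "v \<in> A" using orbit_sub[OF cl u] left.hyps(1) by blast
      have fx: "f x \<in> B" by (rule bij_betw_apply[OF bij left.hyps(2)])
      have e: "f (opA x v) = opB (f x) (f v)" using hom left.hyps(2) vA by blast
      show ?case unfolding e by (rule lmlt_orbit.left[OF left.IH fx])
    next
      case (left_inv v x w)
      have fx: "f x \<in> B" by (rule bij_betw_apply[OF bij left_inv.hyps(2)])
      have fw: "f w \<in> B" by (rule bij_betw_apply[OF bij left_inv.hyps(3)])
      have e: "opB (f x) (f w) = f v"
        using hom left_inv.hyps(2,3,4) by metis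
      show ?case by (rule lmlt_orbit.left_inv[OF left_inv.IH fx fw e])
    qed
    then show "z \<in> lmlt_orbit B opB (f u)" using z by simp
  qed
  show "lmlt_orbit B opB (f u) \<subseteq> f ` lmlt_orbit A opA u"
  proof
    fix z assume "z \<in> lmlt_orbit B opB (f u)"
    then show "z \<in> f ` lmlt_orbit A opA u"
    proof induction
      case base then show ?case by (auto intro: lmlt_orbit.base)
    next
      case (left v x)
      then obtain v0 where v0: "v0 \<in> lmlt_orbit A opA u" "v = f v0" by auto
      have v0A: "v0 \<in> A" using orbit_sub[OF cl u] v0 by auto
      obtain x0 where x0: "x0 \<in> A" "x = f x0" using left.hyps(2) bij
        by (metis bij_betw_imp_surj_on imageE)
      have "opB x v = f (opA x0 v0)" using hom x0 v0 v0A by simp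
      moreover have "opA x0 v0 \<in> lmlt_orbit A opA u"
        by (rule lmlt_orbit.left[OF v0(1) x0(1)])
      ultimately show ?case by auto
    next
      case (left_inv v x w)
      then obtain v0 where v0: "v0 \<in> lmlt_orbit A opA u" "v = f v0" by auto
      have v0A: "v0 \<in> A" using orbit_sub[OF cl u] v0 by auto
      obtain x0 where x0: "x0 \<in> A" "x = f x0" using left_inv.hyps(2) bij
        by (metis bij_betw_imp_surj_on imageE)
      obtain w0 where w0: "w0 \<in> A" "w = f w0" using left_inv.hyps(3) bij
        by (metis bij_betw_imp_surj_on imageE)
      have "f (opA x0 w0) = f v0" using hom x0 w0 left_inv.hyps(4) v0 by simp
      moreover have "opA x0 w0 \<in> A" using cl x0 w0 by auto
      ultimately have "opA x0 w0 = v0" using bij v0A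
        by (metis bij_betw_imp_inj_on inj_onD)
      then have "w0 \<in> lmlt_orbit A opA u"
        using lmlt_orbit.left_inv[OF v0(1) x0(1) w0(1)] by simp
      then show ?case using w0 by auto
    qed
  qed
qed

lemma ext_closed:
  assumes cl: "\<forall>x\<in>Q. \<forall>y\<in>Q. op x y \<in> Q" and th: "\<forall>x\<in>Q. \<forall>y\<in>Q. \<theta> x y permutes S"
  shows "\<forall>p\<in>Q \<times> S. \<forall>q\<in>Q \<times> S. ext_op op \<theta> p q \<in> Q \<times> S"
  using cl th by (auto simp: ext_op_def permutes_in_image)

lemma triv_orbit:
  assumes cl: "\<forall>x\<in>Q. \<forall>y\<in>Q. op x y \<in> Q" and conn: "\<forall>x\<in>Q. lmlt_orbit Q op x = Q"
    and x: "x \<in> Q" and a: "a \<in> S"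
  shows "lmlt_orbit (Q \<times> S) (ext_op op (\<lambda>_ _. id)) (x, a) = Q \<times> {a}"
proof
  show "lmlt_orbit (Q \<times> S) (ext_op op (\<lambda>_ _. id)) (x, a) \<subseteq> Q \<times> {a}"
  proof
    fix v assume "v \<in> lmlt_orbit (Q \<times> S) (ext_op op (\<lambda>_ _. id)) (x, a)"
    then show "v \<in> Q \<times> {a}"
      by induction (use x cl in \<open>auto simp: ext_op_def\<close>)
  qed
  show "Q \<times> {a} \<subseteq> lmlt_orbit (Q \<times> S) (ext_op op (\<lambda>_ _. id)) (x, a)"
  proof
    fix p assume "p \<in> Q \<times> {a}"
    then obtain z where p: "p = (z, a)" "z \<in> lmlt_orbit Q op x" using conn x by auto
    have "(z, a) \<in> lmlt_orbit (Q \<times> S) (ext_op op (\<lambda>_ _. id)) (x, a)" using p(2)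
    proof induction
      case base then show ?case by (rule lmlt_orbit.base)
    next
      case (left v y)
      have "(y, a) \<in> Q \<times> S" using left a by auto
      from lmlt_orbit.left[OF left.IH this] show ?case by (simp add: ext_op_def)
    next
      case (left_inv v y w)
      have "(y, a) \<in> Q \<times> S" "(w, a) \<in> Q \<times> S" using left_inv a by auto
      from lmlt_orbit.left_inv[OF left_inv.IH this] show ?case
        using left_inv.hyps(4) by (simp add: ext_op_def)
    qed
    then show "p \<in> lmlt_orbit (Q \<times> S) (ext_op op (\<lambda>_ _. id)) (x, a)" using p by simp
  qed
qed

lemma proj_surj:
  assumes th: "\<forall>x\<in>Q. \<forall>y\<in>Q. \<theta> x y permutes S"
    and cl: "\<forall>x\<in>Q. \<forall>y\<in>Q. op x y \<in> Q" and x: "x \<in> Q"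
    and a: "a \<in> S" and z: "z \<in> lmlt_orbit Q op x"
  shows "\<exists>b\<in>S. (z, b) \<in> lmlt_orbit (Q \<times> S) (ext_op op \<theta>) (x, a)"
  using z
proof induction
  case base then show ?case using a by (auto intro: lmlt_orbit.base)
next
  case (left v y)
  then obtain b where b: "b \<in> S" "(v, b) \<in> lmlt_orbit (Q \<times> S) (ext_op op \<theta>) (x, a)" by auto
  have "(y, b) \<in> Q \<times> S" using left b by auto
  from lmlt_orbit.left[OF b(2) this] have
    "(op y v, \<theta> y v b) \<in> lmlt_orbit (Q \<times> S) (ext_op op \<theta>) (x, a)" by (simp add: ext_op_def)
  moreover have "\<theta> y v b \<in> S"
  proof -
    have vQ: "v \<in> Q" using orbit_sub[OF cl x] left.hyps(1) by blast
    have "\<theta> y v permutes S" using th left.hyps(2) vQ by simp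
    then show ?thesis using permutes_in_image b(1) by metis
  qed
  ultimately show ?case by auto
next
  case (left_inv v y w)
  then obtain b where b: "b \<in> S" "(v, b) \<in> lmlt_orbit (Q \<times> S) (ext_op op \<theta>) (x, a)" by auto
  have p: "\<theta> y w permutes S" using th left_inv by auto
  define c where "c = inv (\<theta> y w) b"
  have c: "c \<in> S" "\<theta> y w c = b"
    using permutes_in_image[OF permutes_inv[OF p]] permutes_inverses[OF p] b c_def by auto
  have yc: "(y, c) \<in> Q \<times> S" "(w, c) \<in> Q \<times> S" using left_inv c by auto
  have "(w, c) \<in> lmlt_orbit (Q \<times> S) (ext_op op \<theta>) (x, a)"
    by (rule lmlt_orbit.left_inv[OF b(2) yc]) (use left_inv.hyps(4) c in \<open>simp add: ext_op_def\<close>)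
  then show ?case using c(1) by blast
qed


theorem corollary2p4:
  fixes Q :: "'a set" and op :: "'a \<Rightarrow> 'a \<Rightarrow> 'a"
    and S :: "'b set" and \<theta> :: "'a \<Rightarrow> 'a \<Rightarrow> 'b \<Rightarrow> 'b"
  assumes "finite Q"
    and "connected_quandle Q op"
    and "quandle_cocycle Q op S \<theta>"
  shows "(cohomologous_trivial Q op S \<theta> \<longleftrightarrow>
            (\<forall>u\<in>Q \<times> S. finite (lmlt_orbit (Q \<times> S) (ext_op op \<theta>) u)
                         \<and> card (lmlt_orbit (Q \<times> S) (ext_op op \<theta>) u) = card Q))
       \<and> (cohomologous_trivial Q op S \<theta> \<longleftrightarrow>
            quandle_isomorphic (Q \<times> S) (ext_op op \<theta>) (Q \<times> S) (ext_op op (\<lambda>_ _. id)))"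
proof -
  have q: "quandle Q op" and conn: "\<forall>x\<in>Q. lmlt_orbit Q op x = Q"
    using assms(2) unfolding connected_quandle_def by (rule conjunct1, rule conjunct2)
  have cl: "\<forall>x\<in>Q. \<forall>y\<in>Q. op x y \<in> Q"
    using q unfolding quandle_def by (rule conjunct1)
  have th: "\<forall>x\<in>Q. \<forall>y\<in>Q. \<theta> x y permutes S"
    using assms(3) unfolding quandle_cocycle_def by (rule conjunct1)
  have clE: "\<forall>p\<in>Q \<times> S. \<forall>q\<in>Q \<times> S. ext_op op \<theta> p q \<in> Q \<times> S"
    by (rule ext_closed[OF cl th])
  have clE1: "\<forall>p\<in>Q \<times> S. \<forall>q\<in>Q \<times> S. ext_op op (\<lambda>_ _. id) p q \<in> Q \<times> S"
    by (rule ext_closed[OF cl]) (simp add: permutes_id)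
  have i_iii: "quandle_isomorphic (Q \<times> S) (ext_op op \<theta>) (Q \<times> S) (ext_op op (\<lambda>_ _. id))"
    if coh: "cohomologous_trivial Q op S \<theta>"
  proof -
    obtain \<gamma> where g: "\<forall>x\<in>Q. \<gamma> x permutes S"
      "\<forall>x\<in>Q. \<forall>y\<in>Q. \<theta> x y = \<gamma> (op x y) \<circ> inv (\<gamma> y)"
      using coh unfolding cohomologous_trivial_def by blast
    define f where "f = (\<lambda>(x, s). (x, inv (\<gamma> x) s))"
    have "bij_betw f (Q \<times> S) (Q \<times> S)"
    proof (rule bij_betw_byWitness[where f' = "\<lambda>(x, s). (x, \<gamma> x s)"])
      show "\<forall>a\<in>Q \<times> S. (\<lambda>(x, s). (x, \<gamma> x s)) (f a) = a"
        using g(1) by (auto simp: f_def permutes_inverses)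
      show "\<forall>a\<in>Q \<times> S. f ((\<lambda>(x, s). (x, \<gamma> x s)) a) = a"
        using g(1) by (auto simp: f_def permutes_inverses)
      show "f ` (Q \<times> S) \<subseteq> Q \<times> S"
        using g(1) by (auto simp: f_def permutes_in_image permutes_inv)
      show "(\<lambda>(x, s). (x, \<gamma> x s)) ` (Q \<times> S) \<subseteq> Q \<times> S"
        using g(1) by (auto simp: permutes_in_image)
    qed
    moreover have "\<forall>p\<in>Q \<times> S. \<forall>q\<in>Q \<times> S.
        f (ext_op op \<theta> p q) = ext_op op (\<lambda>_ _. id) (f p) (f q)"
    proof (intro ballI)
      fix p q assume p: "p \<in> Q \<times> S" and q: "q \<in> Q \<times> S"
      obtain x a y b where pq: "p = (x, a)" "q = (y, b)" by (cases p, cases q) auto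
      have xy: "x \<in> Q" "y \<in> Q" "op x y \<in> Q" using p q pq cl by auto
      have "inv (\<gamma> (op x y)) (\<theta> x y b) = inv (\<gamma> y) b"
        using g(2) xy permutes_inverses[OF g(1)[rule_format, OF xy(3)]] by simp
      then show "f (ext_op op \<theta> p q) = ext_op op (\<lambda>_ _. id) (f p) (f q)"
        using pq by (simp add: f_def ext_op_def)
    qed
    ultimately show ?thesis by (auto simp: quandle_isomorphic_def quandle_iso_def)
  qed
  have iii_ii: "\<forall>u\<in>Q \<times> S. finite (lmlt_orbit (Q \<times> S) (ext_op op \<theta>) u)
                         \<and> card (lmlt_orbit (Q \<times> S) (ext_op op \<theta>) u) = card Q"
    if qi: "quandle_isomorphic (Q \<times> S) (ext_op op \<theta>) (Q \<times> S) (ext_op op (\<lambda>_ _. id))"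
  proof
    fix u assume u: "u \<in> Q \<times> S"
    obtain f where f: "quandle_iso (Q \<times> S) (ext_op op \<theta>) (Q \<times> S) (ext_op op (\<lambda>_ _. id)) f"
      using qi unfolding quandle_isomorphic_def by blast
    have bij: "bij_betw f (Q \<times> S) (Q \<times> S)" using f by (simp add: quandle_iso_def)
    have "f u \<in> Q \<times> S" using bij_betw_apply[OF bij u] .
    then obtain z a where za: "f u = (z, a)" "z \<in> Q" "a \<in> S" by auto
    have im: "f ` lmlt_orbit (Q \<times> S) (ext_op op \<theta>) u = Q \<times> {a}"
      using iso_orbit[OF f clE u] triv_orbit[OF cl conn za(2,3)] za(1) by simp
    have inj: "inj_on f (lmlt_orbit (Q \<times> S) (ext_op op \<theta>) u)"
      using inj_on_subset[OF bij_betw_imp_inj_on[OF bij] orbit_sub[OF clE u]] .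
    have "finite (Q \<times> {a})" using assms(1) by simp
    then have fin: "finite (lmlt_orbit (Q \<times> S) (ext_op op \<theta>) u)"
      using finite_imageD[OF _ inj] im by simp
    have "card (lmlt_orbit (Q \<times> S) (ext_op op \<theta>) u) = card (Q \<times> {a})"
      using card_image[OF inj] im by simp
    also have "\<dots> = card Q" by (simp add: card_cartesian_product)
    finally show "finite (lmlt_orbit (Q \<times> S) (ext_op op \<theta>) u)
                         \<and> card (lmlt_orbit (Q \<times> S) (ext_op op \<theta>) u) = card Q"
      using fin by simp
  qed
  have ii_i: "cohomologous_trivial Q op S \<theta>"
    if ii: "\<forall>u\<in>Q \<times> S. finite (lmlt_orbit (Q \<times> S) (ext_op op \<theta>) u)
                         \<and> card (lmlt_orbit (Q \<times> S) (ext_op op \<theta>) u) = card Q"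
  proof (cases "Q = {}")
    case True
    then show ?thesis by (auto simp: cohomologous_trivial_def)
  next
    case False
    then obtain x0 where x0: "x0 \<in> Q" by auto
    define Orb where "Orb a = lmlt_orbit (Q \<times> S) (ext_op op \<theta>) (x0, a)" for a
    have OS: "Orb a \<subseteq> Q \<times> S" if "a \<in> S" for a
      unfolding Orb_def by (rule orbit_sub[OF clE]) (use x0 that in simp)
    have img: "fst ` Orb a = Q" if a: "a \<in> S" for a
    proof
      show "fst ` Orb a \<subseteq> Q" using OS[OF a] by auto
      show "Q \<subseteq> fst ` Orb a"
      proof
        fix z assume "z \<in> Q"
        then have "z \<in> lmlt_orbit Q op x0" using conn x0 by auto
        from proj_surj[OF th cl x0 a this] obtain b where "(z, b) \<in> Orb a"
          unfolding Orb_def by auto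
        then show "z \<in> fst ` Orb a" by force
      qed
    qed
    have inj: "inj_on fst (Orb a)" if a: "a \<in> S" for a
    proof (rule eq_card_imp_inj_on)
      have x0a: "(x0, a) \<in> Q \<times> S" using x0 a by simp
      show "finite (Orb a)" using ii[rule_format, OF x0a] unfolding Orb_def by simp
      show "card (fst ` Orb a) = card (Orb a)" using ii[rule_format, OF x0a] img[OF a]
        unfolding Orb_def by simp
    qed
    define g where "g a z = (THE b. (z, b) \<in> Orb a)" for a z
    have guniq: "g a z = b" if a: "a \<in> S" and zb: "(z, b) \<in> Orb a" for a z b
      unfolding g_def
    proof (rule the_equality)
      show "(z, b) \<in> Orb a" by fact
      fix c assume c: "(z, c) \<in> Orb a"
      have "(z, c) = (z, b)" using inj_onD[OF inj[OF a] _ c zb] by simp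
      then show "c = b" by simp
    qed
    have gO: "(z, g a z) \<in> Orb a" if a: "a \<in> S" and z: "z \<in> Q" for a z
    proof -
      from z img[OF a] obtain p where "p \<in> Orb a" "fst p = z" by force
      then obtain b where "(z, b) \<in> Orb a" by (cases p) auto
      then show ?thesis using guniq[OF a] by simp
    qed
    have gS: "g a z \<in> S" if a: "a \<in> S" and z: "z \<in> Q" for a z
      using gO[OF a z] OS[OF a] by auto
    have g0: "g a x0 = a" if a: "a \<in> S" for a
      by (rule guniq[OF a]) (simp add: Orb_def lmlt_orbit.base)
    define \<gamma> where "\<gamma> z a = (if a \<in> S then g a z else a)" for z a
    have perm: "\<gamma> z permutes S" if z: "z \<in> Q" for z
    proof (rule bij_imp_permutes)
      show "\<gamma> z x = x" if "x \<notin> S" for x using that by (simp add: \<gamma>_def)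
      have "inj_on (\<gamma> z) S"
      proof (rule inj_onI)
        fix a b assume a: "a \<in> S" and b: "b \<in> S" and e: "\<gamma> z a = \<gamma> z b"
        then have e': "g a z = g b z" by (simp add: \<gamma>_def)
        have h1: "(z, g a z) \<in> lmlt_orbit (Q \<times> S) (ext_op op \<theta>) (x0, b)"
          using gO[OF b z] e' unfolding Orb_def by simp
        have x0b: "(x0, b) \<in> Q \<times> S" using x0 b by simp
        have h2: "(x0, b) \<in> lmlt_orbit (Q \<times> S) (ext_op op \<theta>) (z, g a z)"
          by (rule orbit_sym[OF clE x0b h1])
        have "(x0, b) \<in> Orb a"
          unfolding Orb_def by (rule orbit_trans[OF gO[OF a z, unfolded Orb_def] h2])
        then have "g a x0 = b" by (rule guniq[OF a])
        then show "a = b" using g0[OF a] by simp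
      qed
      moreover have "\<gamma> z ` S = S"
      proof
        show "\<gamma> z ` S \<subseteq> S" using gS z by (auto simp: \<gamma>_def)
        show "S \<subseteq> \<gamma> z ` S"
        proof
          fix c assume c: "c \<in> S"
          have "x0 \<in> lmlt_orbit Q op z" using conn z x0 by auto
          from proj_surj[OF th cl z c this] obtain b where
            b: "b \<in> S" "(x0, b) \<in> lmlt_orbit (Q \<times> S) (ext_op op \<theta>) (z, c)" by auto
          have zc: "(z, c) \<in> Q \<times> S" using z c by simp
          have "(z, c) \<in> Orb b" unfolding Orb_def by (rule orbit_sym[OF clE zc b(2)])
          then have "g b z = c" using guniq[OF b(1)] by simp
          then show "c \<in> \<gamma> z ` S" using b(1) by (force simp: \<gamma>_def)
        qed
      qed
      ultimately show "bij_betw (\<gamma> z) S S" by (simp add: bij_betw_def)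
    qed
    have eq: "\<theta> x y (\<gamma> y a) = \<gamma> (op x y) a" if x: "x \<in> Q" and y: "y \<in> Q" and a: "a \<in> S"
      for x y a
    proof -
      have "(x, a) \<in> Q \<times> S" using x a by simp
      from lmlt_orbit.left[OF gO[OF a y, unfolded Orb_def] this]
      have "(op x y, \<theta> x y (g a y)) \<in> Orb a" unfolding Orb_def by (simp add: ext_op_def)
      then show ?thesis using guniq[OF a] a by (simp add: \<gamma>_def)
    qed
    show ?thesis unfolding cohomologous_trivial_def
    proof (intro exI conjI ballI)
      show "\<gamma> x permutes S" if "x \<in> Q" for x using perm that .
      fix x y assume x: "x \<in> Q" and y: "y \<in> Q"
      show "\<theta> x y = \<gamma> (op x y) \<circ> inv (\<gamma> y)"
      proof
        fix b
        show "\<theta> x y b = (\<gamma> (op x y) \<circ> inv (\<gamma> y)) b"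
        proof (cases "b \<in> S")
          case True
          define a where "a = inv (\<gamma> y) b"
          have aS: "a \<in> S" and ab: "\<gamma> y a = b"
            using permutes_in_image[OF permutes_inv[OF perm[OF y]]] True
              permutes_inverses[OF perm[OF y]] a_def by auto
          have "\<theta> x y (\<gamma> y a) = \<gamma> (op x y) a" by (rule eq[OF x y aS])
          then show ?thesis using ab a_def by simp
        next
          case False
          have "inv (\<gamma> y) b = b" using permutes_not_in[OF permutes_inv[OF perm[OF y]] False] .
          moreover have "\<gamma> (op x y) b = b" using False by (simp add: \<gamma>_def)
          moreover have "\<theta> x y b = b" using permutes_not_in[OF th[rule_format, OF x y] False] .
          ultimately show ?thesis by simp
        qed
      qed
    qed
  qed
  show ?thesis
    apply (intro conjI iffI)
       apply (rule iii_ii, rule i_iii, assumption)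
      apply (rule ii_i, assumption)
     apply (rule i_iii, assumption)
    apply (rule ii_i, rule iii_ii, assumption)
    done
qed

end
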